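(* Let $B$ be the open unit disk and $U=(u,v)\in C^1(\overline B;\mathbb R^2)$ be harmonic in $B$ with $\det DU>0$ on $\partial B$. Then $\det DU>0$ everywhere in $B$ if and only if there exists $\alpha\in[0,2\pi]$ such that $\nabla u_\alpha\neq0$ everywhere in $B$, where $u_\alpha=\cos(\alpha)u+\sin(\alpha)v$. *)

theory Defs
  imports "HOL-Analysis.Analysis"
begin

text \<open>Planar points are pairs \<open>(x,y) :: real \<times> real\<close> (Euclidean norm), so
  \<open>ball 0 1\<close> is the open unit disk B and \<open>cball 0 1\<close> its closure.\<close>

text \<open>Partial derivatives of a scalar function, taken within a set S
  (for an open S and interior points this is the usual partial derivative).\<close>
definition pdx :: "(real \<times> real) set \<Rightarrow> (real \<times> real \<Rightarrow> real) \<Rightarrow> real \<times> real \<Rightarrow> real" where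
  "pdx S f x = frechet_derivative f (at x within S) (1, 0)"

definition pdy :: "(real \<times> real) set \<Rightarrow> (real \<times> real \<Rightarrow> real) \<Rightarrow> real \<times> real \<Rightarrow> real" where
  "pdy S f x = frechet_derivative f (at x within S) (0, 1)"

definition C1_closure :: "(real \<times> real) set \<Rightarrow> (real \<times> real \<Rightarrow> real) \<Rightarrow> bool" where
  "C1_closure S f \<longleftrightarrow>
     (\<forall>x\<in>closure S. f differentiable (at x within closure S)) \<and>
     continuous_on (closure S) (pdx (closure S) f) \<and>
     continuous_on (closure S) (pdy (closure S) f)"

definition harmonic_on :: "(real \<times> real) set \<Rightarrow> (real \<times> real \<Rightarrow> real) \<Rightarrow> bool" where
  "harmonic_on S f \<longleftrightarrow>
     (\<forall>x\<in>S. f differentiable (at x)) \<and>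
     (\<forall>x\<in>S. pdx UNIV f differentiable (at x) \<and> pdy UNIV f differentiable (at x)) \<and>
     continuous_on S (pdx UNIV (pdx UNIV f)) \<and> continuous_on S (pdy UNIV (pdx UNIV f)) \<and>
     continuous_on S (pdx UNIV (pdy UNIV f)) \<and> continuous_on S (pdy UNIV (pdy UNIV f)) \<and>
     (\<forall>x\<in>S. pdx UNIV (pdx UNIV f) x + pdy UNIV (pdy UNIV f) x = 0)"

definition jac_det :: "(real \<times> real) set \<Rightarrow> (real \<times> real \<Rightarrow> real) \<Rightarrow> (real \<times> real \<Rightarrow> real) \<Rightarrow> real \<times> real \<Rightarrow> real" where
  "jac_det S u v x = pdx S u x * pdy S v x - pdy S u x * pdx S v x"

definition grad :: "(real \<times> real) set \<Rightarrow> (real \<times> real \<Rightarrow> real) \<Rightarrow> real \<times> real \<Rightarrow> real \<times> real" where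
  "grad S f x = (pdx S f x, pdy S f x)"

end

theory Submission
  imports Defs "HOL-Complex_Analysis.Complex_Analysis"
begin

lemma fd_lin:
  fixes w :: "real \<times> real \<Rightarrow> real"
  assumes "w differentiable at q"
  shows "frechet_derivative w (at q) h = fst h * pdx UNIV w q + snd h * pdy UNIV w q"
proof -
  have "(w has_derivative frechet_derivative w (at q)) (at q)"
    using assms frechet_derivative_works by blast
  then have lin: "linear (frechet_derivative w (at q))"
    using has_derivative_linear by blast
  obtain h1 h2 where hh: "h = (h1,h2)" by (cases h)
  have h: "(h1,h2) = h1 *\<^sub>R (1,0) + h2 *\<^sub>R (0,1)" by simp
  have "frechet_derivative w (at q) (h1 *\<^sub>R (1,0) + h2 *\<^sub>R (0,1)) = h1 *\<^sub>R frechet_derivative w (at q) (1,0) + h2 *\<^sub>R frechet_derivative w (at q) (0,1)"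
    by (simp only: linear_add[OF lin] linear_scale[OF lin])
  then show ?thesis unfolding hh h[symmetric] by (simp add: pdx_def pdy_def)
qed

lemma line_x:
  fixes w :: "real \<times> real \<Rightarrow> real"
  assumes "w differentiable at (x0 + s, y0)"
  shows "((\<lambda>s. w (x0+s, y0)) has_real_derivative pdx UNIV w (x0+s,y0)) (at s)"
proof -
  have d: "(w has_derivative frechet_derivative w (at (x0+s,y0))) (at (x0+s,y0))"
    using assms frechet_derivative_works by blast
  have l: "((\<lambda>s. (x0+s, y0)) has_derivative (\<lambda>h. (h,0))) (at s)"
    by (auto intro!: derivative_eq_intros)
  have "((\<lambda>s. w (x0+s, y0)) has_derivative (\<lambda>h. frechet_derivative w (at (x0+s,y0)) (h,0))) (at s)"
    using has_derivative_compose[OF l d] by (simp add: o_def)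
  moreover have "(\<lambda>h. frechet_derivative w (at (x0+s,y0)) (h,0)) = (\<lambda>h. h * pdx UNIV w (x0+s,y0))"
    using fd_lin[OF assms] by auto
  ultimately show ?thesis by (simp add: has_field_derivative_def mult.commute[of _ "pdx UNIV w _"] mult.commute[of _ "pdy UNIV w _"])
qed

lemma line_y:
  fixes w :: "real \<times> real \<Rightarrow> real"
  assumes "w differentiable at (x0, y0 + s)"
  shows "((\<lambda>s. w (x0, y0+s)) has_real_derivative pdy UNIV w (x0,y0+s)) (at s)"
proof -
  have d: "(w has_derivative frechet_derivative w (at (x0,y0+s))) (at (x0,y0+s))"
    using assms frechet_derivative_works by blast
  have l: "((\<lambda>s. (x0, y0+s)) has_derivative (\<lambda>h. (0,h))) (at s)"
    by (auto intro!: derivative_eq_intros)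
  have "((\<lambda>s. w (x0, y0+s)) has_derivative (\<lambda>h. frechet_derivative w (at (x0,y0+s)) (0,h))) (at s)"
    using has_derivative_compose[OF l d] by (simp add: o_def)
  moreover have "(\<lambda>h. frechet_derivative w (at (x0,y0+s)) (0,h)) = (\<lambda>h. h * pdy UNIV w (x0,y0+s))"
    using fd_lin[OF assms] by auto
  ultimately show ?thesis by (simp add: has_field_derivative_def mult.commute[of _ "pdx UNIV w _"] mult.commute[of _ "pdy UNIV w _"])
qed

lemma norm_pair_le: "norm ((x::real), (y::real)) \<le> \<bar>x\<bar> + \<bar>y\<bar>"
  by (metis norm_Pair_le real_norm_def)


lemma young1:
  fixes w :: "real \<times> real \<Rightarrow> real"
  assumes S: "open S" "(a,b) \<in> S" and dw: "\<forall>q\<in>S. w differentiable at q"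
    and dP: "pdx UNIV w differentiable at (a,b)" and e: "e > 0"
  shows "\<exists>\<delta>>0. \<forall>t. 0<t \<and> t<\<delta> \<longrightarrow>
     \<bar>(w(a+t,b+t) - w(a+t,b) - w(a,b+t) + w(a,b)) - t^2 * pdy UNIV (pdx UNIV w) (a,b)\<bar> \<le> 4*e*t^2"
proof -
  define P where "P = pdx UNIV w"
  define DP where "DP = frechet_derivative P (at (a,b))"
  obtain d1 where d1: "d1 > 0" "ball (a,b) d1 \<subseteq> S" using S open_contains_ball by blast
  have "(P has_derivative DP) (at (a,b))" using dP frechet_derivative_works P_def DP_def by blast
  then obtain d2 where d2: "d2 > 0" "\<forall>y. norm (y - (a,b)) < d2 \<longrightarrow> norm (P y - P (a,b) - DP (y - (a,b))) \<le> e * norm (y - (a,b))"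
    using e unfolding has_derivative_at_alt by blast
  have DPl: "DP h = fst h * pdx UNIV P (a,b) + snd h * pdy UNIV P (a,b)" for h
    unfolding DP_def using fd_lin dP P_def by blast
  show ?thesis
  proof (intro exI[of _ "min d1 d2 / 2"] conjI allI impI)
    show "min d1 d2 / 2 > 0" using d1 d2 by simp
    fix t :: real assume t: "0 < t \<and> t < min d1 d2 / 2"
    have near: "norm ((a + s, b + r) - (a,b)) < min d1 d2" if "0 \<le> s" "s \<le> t" "0 \<le> r" "r \<le> t" for s r
    proof -
      have "norm ((a + s, b + r) - (a,b)) = norm (s, r)" by simp
      also have "\<dots> \<le> \<bar>s\<bar> + \<bar>r\<bar>" by (rule norm_pair_le)
      finally show ?thesis using that t by linarith
    qed
    have inS: "(a + s, b + r) \<in> S" if "0 \<le> s" "s \<le> t" "0 \<le> r" "r \<le> t" for s r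
    proof -
      have "dist (a+s,b+r) (a,b) < d1" unfolding dist_norm using near[OF that] by linarith
      then show ?thesis using d1(2) by (auto simp: dist_commute)
    qed
    define g where "g s = w(a+s,b+t) - w(a+s,b)" for s
    have gd: "(g has_real_derivative (P(a+s,b+t) - P(a+s,b))) (at s)" if "0 \<le> s" "s \<le> t" for s
    proof -
      have "w differentiable at (a+s,b+t)" "w differentiable at (a+s,b+0)"
        using inS[OF that] inS[OF that order.refl] dw t by auto
      from line_x[OF this(1)] line_x[OF this(2)] show ?thesis
        unfolding g_def P_def by (auto intro!: derivative_eq_intros)
    qed
    have "continuous_on {0..t} g"
      using gd by (auto intro!: continuous_at_imp_continuous_on DERIV_continuous)
    moreover have "g differentiable at s" if "0 < s" "s < t" for s
      using gd[of s] that real_differentiable_def by fastforce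
    ultimately obtain l \<xi> where \<xi>: "0 < \<xi>" "\<xi> < t" "(g has_real_derivative l) (at \<xi>)" "g t - g 0 = (t - 0) * l"
      using MVT[of 0 t g] t by blast
    have l: "l = P(a+\<xi>,b+t) - P(a+\<xi>,b)" using DERIV_unique[OF \<xi>(3) gd[of \<xi>]] \<xi> by simp
    have n1: "norm ((a + \<xi>, b + t) - (a,b)) < d2" "norm ((a + \<xi>, b + 0) - (a,b)) < d2"
      using near[of \<xi> t] near[of \<xi> 0] \<xi> t by auto
    have e1: "\<bar>P(a+\<xi>,b+t) - P(a,b) - DP(\<xi>,t)\<bar> \<le> e * norm (\<xi>, t)"
      using d2(2)[rule_format, OF n1(1)] by simp
    have e2: "\<bar>P(a+\<xi>,b) - P(a,b) - DP(\<xi>,0)\<bar> \<le> e * norm (\<xi>, 0::real)"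
      using d2(2)[rule_format, OF n1(2)] by simp
    have "norm (\<xi>, t) \<le> 2*t" using norm_pair_le[of \<xi> t] \<xi> by simp
    then have e1': "e * norm (\<xi>, t) \<le> e * (2*t)" using e by (intro mult_left_mono) auto
    have "norm (\<xi>, 0::real) \<le> 2*t" using norm_pair_le[of \<xi> 0] \<xi> by simp
    then have e2': "e * norm (\<xi>, 0::real) \<le> e * (2*t)" using e by (intro mult_left_mono) auto
    have "DP(\<xi>,t) - DP(\<xi>,0) = t * pdy UNIV P (a,b)" using DPl by simp
    then have "\<bar>l - t * pdy UNIV P (a,b)\<bar> \<le> 4*e*t" using e1 e2 e1' e2' l by linarith
    then have "t * \<bar>l - t * pdy UNIV P (a,b)\<bar> \<le> t * (4*e*t)" using t by (intro mult_left_mono) auto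
    moreover have "w(a+t,b+t) - w(a+t,b) - w(a,b+t) + w(a,b) = t * l" using \<xi>(4) by (simp add: g_def)
    moreover
    have "(w(a+t,b+t) - w(a+t,b) - w(a,b+t) + w(a,b)) - t^2 * pdy UNIV P (a,b) = t * (l - t * pdy UNIV P (a,b))"
      using calculation(2) by (simp add: power2_eq_square algebra_simps)
    then have "\<bar>(w(a+t,b+t) - w(a+t,b) - w(a,b+t) + w(a,b)) - t^2 * pdy UNIV P (a,b)\<bar> = t * \<bar>l - t * pdy UNIV P (a,b)\<bar>"
      using t by (simp add: abs_mult)
    ultimately show "\<bar>(w(a+t,b+t) - w(a+t,b) - w(a,b+t) + w(a,b)) - t^2 * pdy UNIV (pdx UNIV w) (a,b)\<bar> \<le> 4*e*t^2"
      by (simp add: P_def power2_eq_square mult_ac)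
  qed
qed


lemma young2:
  fixes w :: "real \<times> real \<Rightarrow> real"
  assumes S: "open S" "(a,b) \<in> S" and dw: "\<forall>q\<in>S. w differentiable at q"
    and dP: "pdy UNIV w differentiable at (a,b)" and e: "e > 0"
  shows "\<exists>\<delta>>0. \<forall>t. 0<t \<and> t<\<delta> \<longrightarrow>
     \<bar>(w(a+t,b+t) - w(a+t,b) - w(a,b+t) + w(a,b)) - t^2 * pdx UNIV (pdy UNIV w) (a,b)\<bar> \<le> 4*e*t^2"
proof -
  define P where "P = pdy UNIV w"
  define DP where "DP = frechet_derivative P (at (a,b))"
  obtain d1 where d1: "d1 > 0" "ball (a,b) d1 \<subseteq> S" using S open_contains_ball by blast
  have "(P has_derivative DP) (at (a,b))" using dP frechet_derivative_works P_def DP_def by blast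
  then obtain d2 where d2: "d2 > 0" "\<forall>y. norm (y - (a,b)) < d2 \<longrightarrow> norm (P y - P (a,b) - DP (y - (a,b))) \<le> e * norm (y - (a,b))"
    using e unfolding has_derivative_at_alt by blast
  have DPl: "DP h = fst h * pdx UNIV P (a,b) + snd h * pdy UNIV P (a,b)" for h
    unfolding DP_def using fd_lin dP P_def by blast
  show ?thesis
  proof (intro exI[of _ "min d1 d2 / 2"] conjI allI impI)
    show "min d1 d2 / 2 > 0" using d1 d2 by simp
    fix t :: real assume t: "0 < t \<and> t < min d1 d2 / 2"
    have near: "norm ((a + s, b + r) - (a,b)) < min d1 d2" if "0 \<le> s" "s \<le> t" "0 \<le> r" "r \<le> t" for s r
    proof -
      have "norm ((a + s, b + r) - (a,b)) = norm (s, r)" by simp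
      also have "\<dots> \<le> \<bar>s\<bar> + \<bar>r\<bar>" by (rule norm_pair_le)
      finally show ?thesis using that t by linarith
    qed
    have inS: "(a + s, b + r) \<in> S" if "0 \<le> s" "s \<le> t" "0 \<le> r" "r \<le> t" for s r
    proof -
      have "dist (a+s,b+r) (a,b) < d1" unfolding dist_norm using near[OF that] by linarith
      then show ?thesis using d1(2) by (auto simp: dist_commute)
    qed
    define g where "g s = w(a+t,b+s) - w(a,b+s)" for s
    have gd: "(g has_real_derivative (P(a+t,b+s) - P(a,b+s))) (at s)" if "0 \<le> s" "s \<le> t" for s
    proof -
      have "w differentiable at (a+t,b+s)" "w differentiable at (a+0,b+s)"
        using inS[of t s] inS[of 0 s] that dw t by auto
      from line_y[OF this(1)] line_y[OF this(2)] show ?thesis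
        unfolding g_def P_def by (auto intro!: derivative_eq_intros)
    qed
    have "continuous_on {0..t} g"
      using gd by (auto intro!: continuous_at_imp_continuous_on DERIV_continuous)
    moreover have "g differentiable at s" if "0 < s" "s < t" for s
      using gd[of s] that real_differentiable_def by fastforce
    ultimately obtain l \<xi> where \<xi>: "0 < \<xi>" "\<xi> < t" "(g has_real_derivative l) (at \<xi>)" "g t - g 0 = (t - 0) * l"
      using MVT[of 0 t g] t by blast
    have l: "l = P(a+t,b+\<xi>) - P(a,b+\<xi>)" using DERIV_unique[OF \<xi>(3) gd[of \<xi>]] \<xi> by simp
    have n1: "norm ((a + t, b + \<xi>) - (a,b)) < d2" "norm ((a + 0, b + \<xi>) - (a,b)) < d2"
      using near[of t \<xi>] near[of 0 \<xi>] \<xi> t by auto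
    have e1: "\<bar>P(a+t,b+\<xi>) - P(a,b) - DP(t,\<xi>)\<bar> \<le> e * norm (t, \<xi>)"
      using d2(2)[rule_format, OF n1(1)] by simp
    have e2: "\<bar>P(a,b+\<xi>) - P(a,b) - DP(0,\<xi>)\<bar> \<le> e * norm (0::real, \<xi>)"
      using d2(2)[rule_format, OF n1(2)] by simp
    have "norm (t, \<xi>) \<le> 2*t" using norm_pair_le[of t \<xi>] \<xi> by simp
    then have e1': "e * norm (t, \<xi>) \<le> e * (2*t)" using e by (intro mult_left_mono) auto
    have "norm (0::real, \<xi>) \<le> 2*t" using norm_pair_le[of 0 \<xi>] \<xi> by simp
    then have e2': "e * norm (0::real, \<xi>) \<le> e * (2*t)" using e by (intro mult_left_mono) auto
    have "DP(t,\<xi>) - DP(0,\<xi>) = t * pdx UNIV P (a,b)" using DPl by simp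
    then have "\<bar>l - t * pdx UNIV P (a,b)\<bar> \<le> 4*e*t" using e1 e2 e1' e2' l by linarith
    then have "t * \<bar>l - t * pdx UNIV P (a,b)\<bar> \<le> t * (4*e*t)" using t by (intro mult_left_mono) auto
    moreover have "w(a+t,b+t) - w(a+t,b) - w(a,b+t) + w(a,b) = t * l" using \<xi>(4) by (simp add: g_def)
    moreover
    have "(w(a+t,b+t) - w(a+t,b) - w(a,b+t) + w(a,b)) - t^2 * pdx UNIV P (a,b) = t * (l - t * pdx UNIV P (a,b))"
      using calculation(2) by (simp add: power2_eq_square algebra_simps)
    then have "\<bar>(w(a+t,b+t) - w(a+t,b) - w(a,b+t) + w(a,b)) - t^2 * pdx UNIV P (a,b)\<bar> = t * \<bar>l - t * pdx UNIV P (a,b)\<bar>"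
      using t by (simp add: abs_mult)
    ultimately show "\<bar>(w(a+t,b+t) - w(a+t,b) - w(a,b+t) + w(a,b)) - t^2 * pdx UNIV (pdy UNIV w) (a,b)\<bar> \<le> 4*e*t^2"
      by (simp add: P_def power2_eq_square mult_ac)
  qed
qed

lemma clairaut:
  fixes w :: "real \<times> real \<Rightarrow> real"
  assumes S: "open S" "p \<in> S" and dw: "\<forall>q\<in>S. w differentiable at q"
    and dP: "pdx UNIV w differentiable at p" and dQ: "pdy UNIV w differentiable at p"
  shows "pdy UNIV (pdx UNIV w) p = pdx UNIV (pdy UNIV w) p"
proof -
  obtain a b where p: "p = (a,b)" by (cases p)
  let ?A = "pdy UNIV (pdx UNIV w) (a,b)" and ?B = "pdx UNIV (pdy UNIV w) (a,b)"
  have "\<bar>?A - ?B\<bar> \<le> 8*e" if e: "e > 0" for e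
  proof -
    obtain d1 where d1: "d1 > 0" "\<forall>t. 0<t \<and> t<d1 \<longrightarrow>
     \<bar>(w(a+t,b+t) - w(a+t,b) - w(a,b+t) + w(a,b)) - t^2 * ?A\<bar> \<le> 4*e*t^2"
      using young1[OF S(1) S(2)[unfolded p] dw dP[unfolded p] e] by blast
    obtain d2 where d2: "d2 > 0" "\<forall>t. 0<t \<and> t<d2 \<longrightarrow>
     \<bar>(w(a+t,b+t) - w(a+t,b) - w(a,b+t) + w(a,b)) - t^2 * ?B\<bar> \<le> 4*e*t^2"
      using young2[OF S(1) S(2)[unfolded p] dw dQ[unfolded p] e] by blast
    define t where "t = min d1 d2 / 2"
    have t: "0 < t" "t < d1" "t < d2" using d1 d2 by (auto simp: t_def)
    have "\<bar>t^2 * ?A - t^2 * ?B\<bar> \<le> 8*e*t^2"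
      using d1(2)[rule_format, of t] d2(2)[rule_format, of t] t by linarith
    then have "t^2 * \<bar>?A - ?B\<bar> \<le> t^2 * (8*e)"
      by (simp add: abs_mult right_diff_distrib[symmetric] mult_ac)
    then show ?thesis using t by (simp add: mult_le_cancel_left)
  qed
  then have "\<bar>?A - ?B\<bar> \<le> 0"
  proof (rule_tac ccontr)
    assume h: "\<And>e. e > 0 \<Longrightarrow> \<bar>?A - ?B\<bar> \<le> 8*e" and n: "\<not> \<bar>?A - ?B\<bar> \<le> 0"
    then have "\<bar>?A - ?B\<bar> \<le> 8*(\<bar>?A - ?B\<bar>/16)" by (intro h) auto
    with n show False by (simp add: field_simps)
  qed
  then show ?thesis using p by simp
qed

lemma norm_cp: "norm (Re z, Im z) = cmod z"
  by (simp add: norm_Pair cmod_def)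

lemma harm_holo:
  fixes w :: "real \<times> real \<Rightarrow> real"
  assumes h: "harmonic_on (ball 0 1) w"
  shows "(\<lambda>z. Complex (pdx UNIV w (Re z, Im z)) (- pdy UNIV w (Re z, Im z))) holomorphic_on ball 0 1"
  unfolding holomorphic_on_def
proof
  fix z :: complex assume z: "z \<in> ball 0 1"
  define p where "p = (Re z, Im z)"
  have p: "p \<in> ball (0::real\<times>real) 1" using z norm_cp[of z] by (simp add: p_def)
  define P where "P = pdx UNIV w"
  define Q where "Q = pdy UNIV w"
  have dw: "\<forall>q\<in>ball 0 1. w differentiable at q" and dP: "P differentiable at p" and dQ: "Q differentiable at p"
    and lap: "pdx UNIV P p + pdy UNIV Q p = 0"
    using h p unfolding harmonic_on_def P_def Q_def by auto
  have cl: "pdy UNIV P p = pdx UNIV Q p"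
    unfolding P_def Q_def by (rule clairaut[OF open_ball p dw dP[unfolded P_def] dQ[unfolded Q_def]])
  define DP where "DP = frechet_derivative P (at p)"
  define DQ where "DQ = frechet_derivative Q (at p)"
  have hP: "(P has_derivative DP) (at p)" using dP frechet_derivative_works DP_def by blast
  have hQ: "(Q has_derivative DQ) (at p)" using dQ frechet_derivative_works DQ_def by blast
  have hc: "((\<lambda>z. (Re z, Im z)) has_derivative (\<lambda>h. (Re h, Im h))) (at z)"
    by (auto intro!: derivative_eq_intros)
  have hP': "((\<lambda>z. P (Re z, Im z)) has_derivative (\<lambda>h. DP (Re h, Im h))) (at z)"
    using has_derivative_compose[OF hc hP[unfolded p_def]] by (simp add: o_def)
  have hQ': "((\<lambda>z. Q (Re z, Im z)) has_derivative (\<lambda>h. DQ (Re h, Im h))) (at z)"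
    using has_derivative_compose[OF hc hQ[unfolded p_def]] by (simp add: o_def)
  have hf: "((\<lambda>z. complex_of_real (P (Re z, Im z)) + \<i> * complex_of_real (- Q (Re z, Im z))) has_derivative
     (\<lambda>h. complex_of_real (DP (Re h, Im h)) + \<i> * complex_of_real (- DQ (Re h, Im h)))) (at z)"
    by (intro has_derivative_add has_derivative_mult_right has_derivative_of_real has_derivative_minus hP' hQ')
  define c where "c = Complex (pdx UNIV P p) (- pdx UNIV Q p)"
  have eq: "(\<lambda>h. complex_of_real (DP (Re h, Im h)) + \<i> * complex_of_real (- DQ (Re h, Im h))) = (\<lambda>h. c * h)"
  proof
    fix h
    show "complex_of_real (DP (Re h, Im h)) + \<i> * complex_of_real (- DQ (Re h, Im h)) = c * h"
      unfolding DP_def DQ_def fd_lin[OF dP] fd_lin[OF dQ]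
      using cl lap by (simp add: c_def complex_eq_iff algebra_simps eq_neg_iff_add_eq_0[symmetric] add.commute)
  qed
  have fe: "(\<lambda>z. Complex (pdx UNIV w (Re z, Im z)) (- pdy UNIV w (Re z, Im z))) =
     (\<lambda>z. complex_of_real (P (Re z, Im z)) + \<i> * complex_of_real (- Q (Re z, Im z)))"
    by (simp add: P_def Q_def fun_eq_iff complex_eq_iff)
  have "((\<lambda>z. Complex (pdx UNIV w (Re z, Im z)) (- pdy UNIV w (Re z, Im z))) has_field_derivative c) (at z)"
    unfolding has_field_derivative_def fe using hf eq by simp
  then show "(\<lambda>z. Complex (pdx UNIV w (Re z, Im z)) (- pdy UNIV w (Re z, Im z))) field_differentiable at z within ball 0 1"
    using field_differentiable_at_within field_differentiable_def by blast
qed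

lemma comp_id:
  fixes pu qu pv qv c s :: real
  assumes cs: "c^2 + s^2 = 1" and nz: "(c*pu + s*pv)^2 + (c*qu+s*qv)^2 > 0"
  shows "Re (-\<i> * ((- complex_of_real s * Complex pu (-qu) + complex_of_real c * Complex pv (-qv)) /
          (complex_of_real c * Complex pu (-qu) + complex_of_real s * Complex pv (-qv))))
     * ((c*pu + s*pv)^2 + (c*qu+s*qv)^2) = -(pu*qv - qu*pv)"
proof -
  have G: "- complex_of_real s * Complex pu (-qu) + complex_of_real c * Complex pv (-qv) = Complex (-s*pu + c*pv) (-(-s*qu + c*qv))"
    by (simp add: complex_eq_iff)
  have F: "complex_of_real c * Complex pu (-qu) + complex_of_real s * Complex pv (-qv) = Complex (c*pu + s*pv) (-(c*qu+s*qv))"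
    by (simp add: complex_eq_iff)
  have r: "Re (-\<i> * w) = Im w" for w by simp
  have "Re (-\<i> * ((- complex_of_real s * Complex pu (-qu) + complex_of_real c * Complex pv (-qv)) /
          (complex_of_real c * Complex pu (-qu) + complex_of_real s * Complex pv (-qv))))
     = (-(-s*qu + c*qv) * (c*pu + s*pv) - (-s*pu + c*pv) * (-(c*qu+s*qv))) / ((c*pu + s*pv)^2 + (-(c*qu+s*qv))^2)"
    unfolding r G F Im_divide by simp
  also have "\<dots> = -(pu*qv - qu*pv) * (c^2+s^2) / ((c*pu + s*pv)^2 + (c*qu+s*qv)^2)"
    by (simp add: algebra_simps power2_eq_square)
  finally have eq: "Re (-\<i> * ((- complex_of_real s * Complex pu (-qu) + complex_of_real c * Complex pv (-qv)) /
          (complex_of_real c * Complex pu (-qu) + complex_of_real s * Complex pv (-qv))))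
     = -(pu*qv - qu*pv) * (c^2+s^2) / ((c*pu + s*pv)^2 + (c*qu+s*qv)^2)" .
  have Dne: "(c*pu + s*pv)^2 + (c*qu+s*qv)^2 \<noteq> 0" using nz by linarith
  show ?thesis unfolding eq using Dne cs by simp
qed

lemma pd_comb:
  fixes u v :: "real \<times> real \<Rightarrow> real"
  assumes "u differentiable at x" "v differentiable at x"
  shows "pdx UNIV (\<lambda>y. a * u y + b* v y) x = a*pdx UNIV u x + b * pdx UNIV v x"
    "pdy UNIV (\<lambda>y. a * u y + b* v y) x = a*pdy UNIV u x + b * pdy UNIV v x"
proof -
  have "((\<lambda>y. a * u y + b* v y) has_derivative (\<lambda>h. a*frechet_derivative u (at x) h + b * frechet_derivative v (at x) h)) (at x)"
    using assms by (intro has_derivative_add has_derivative_mult_right) (auto simp: frechet_derivative_works)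
  then have "frechet_derivative (\<lambda>y. a * u y + b* v y) (at x) = (\<lambda>h. a*frechet_derivative u (at x) h + b * frechet_derivative v (at x) h)"
    using frechet_derivative_at by metis
  then show "pdx UNIV (\<lambda>y. a * u y + b* v y) x = a*pdx UNIV u x + b * pdx UNIV v x"
    "pdy UNIV (\<lambda>y. a * u y + b* v y) x = a*pdy UNIV u x + b * pdy UNIV v x"
    by (simp_all add: pdx_def pdy_def)
qed

lemma pd_interior:
  assumes "x \<in> ball (0::real\<times>real) 1"
  shows "pdx (cball 0 1) w x = pdx UNIV w x" "pdy (cball 0 1) w x = pdy UNIV w x"
  using at_within_interior[of x "cball (0::real\<times>real) 1"] assms
  by (simp_all add: pdx_def pdy_def)

lemma sgn_aux:
  fixes x d j :: real
  assumes "x * d = - j" "d > 0"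
  shows "x < 0 \<longleftrightarrow> j > 0"
proof -
  have "j = -(x*d)" using assms by simp
  then show ?thesis using assms(2) by (simp add: mult_less_0_iff)
qed

theorem corollary3p3:
  fixes u v :: "real \<times> real \<Rightarrow> real"
  assumes "C1_closure (ball 0 1) u" and "C1_closure (ball 0 1) v"
    and "harmonic_on (ball 0 1) u" and "harmonic_on (ball 0 1) v"
    and "\<forall>x\<in>sphere 0 1. jac_det (cball 0 1) u v x > 0"
  shows "(\<forall>x\<in>ball 0 1. jac_det (cball 0 1) u v x > 0) \<longleftrightarrow>
         (\<exists>\<alpha>\<in>{0..2*pi}. \<forall>x\<in>ball 0 1.
             grad UNIV (\<lambda>y. cos \<alpha> * u y + sin \<alpha> * v y) x \<noteq> (0, 0))"
proof -
  have cl: "closure (ball (0::real\<times>real) 1) = cball 0 1" by (rule closure_ball) simp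
  define J where "J x = pdx (cball 0 1) u x * pdy (cball 0 1) v x - pdy (cball 0 1) u x * pdx (cball 0 1) v x" for x
  have JJ: "jac_det (cball 0 1) u v = J" by (simp add: fun_eq_iff jac_det_def J_def)
  have Jc: "continuous_on (cball 0 1) J"
    using assms(1,2) unfolding J_def[abs_def] C1_closure_def cl
    by (intro continuous_intros) auto
  have Jint: "J x = pdx UNIV u x * pdy UNIV v x - pdy UNIV u x * pdx UNIV v x" if "x \<in> ball 0 1" for x
    using pd_interior[OF that] by (simp add: J_def)
  have du: "\<forall>x\<in>ball 0 1. u differentiable at x" and dv: "\<forall>x\<in>ball 0 1. v differentiable at x"
    using assms(3,4) unfolding harmonic_on_def by auto
  have bd: "\<forall>x\<in>sphere 0 1. J x > 0" using assms(5) JJ by simp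
  show ?thesis unfolding JJ
  proof
    assume pos: "\<forall>x\<in>ball 0 1. J x > 0"
    show "\<exists>\<alpha>\<in>{0..2*pi}. \<forall>x\<in>ball 0 1. grad UNIV (\<lambda>y. cos \<alpha> * u y + sin \<alpha> * v y) x \<noteq> (0, 0)"
    proof (intro bexI[of _ 0] ballI)
      fix x :: "real \<times> real" assume x: "x \<in> ball 0 1"
      have e: "(\<lambda>y. cos 0 * u y + sin 0 * v y) = u" by simp
      show "grad UNIV (\<lambda>y. cos 0 * u y + sin 0 * v y) x \<noteq> (0, 0)"
        unfolding e grad_def using pos[rule_format, OF x] Jint[OF x] by auto
    qed simp
  next
    assume "\<exists>\<alpha>\<in>{0..2*pi}. \<forall>x\<in>ball 0 1. grad UNIV (\<lambda>y. cos \<alpha> * u y + sin \<alpha> * v y) x \<noteq> (0, 0)"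
    then obtain \<alpha> where nz: "\<forall>x\<in>ball 0 1. grad UNIV (\<lambda>y. cos \<alpha> * u y + sin \<alpha> * v y) x \<noteq> (0, 0)"
      by blast
    show "\<forall>x\<in>ball 0 1. J x > 0"
    proof (rule ccontr)
      assume "\<not> (\<forall>x\<in>ball 0 1. J x > 0)"
      then obtain x0 where x0: "x0 \<in> ball 0 1" "J x0 \<le> 0" by auto
      define K where "K = {x \<in> cball 0 1. J x \<le> 0}"
      have "closed K" unfolding K_def
        by (rule continuous_on_closed_Collect_le[OF Jc continuous_on_const closed_cball])
      moreover have "K \<subseteq> cball 0 1" by (auto simp: K_def)
      then have "bounded K" using bounded_cball bounded_subset by blast
      ultimately have cK: "compact K" by (simp add: compact_eq_bounded_closed)
      have x0K: "x0 \<in> K" using x0 by (auto simp: K_def)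
      then obtain x1 where x1: "x1 \<in> K" "\<forall>y\<in>K. norm y \<le> norm x1"
        using continuous_attains_sup[OF cK _ continuous_on_norm_id] by blast
      define m where "m = norm x1"
      have "m \<le> 1" using x1 by (auto simp: K_def m_def)
      moreover have "m \<noteq> 1"
      proof
        assume "m = 1"
        then have "x1 \<in> sphere 0 1" by (simp add: m_def)
        then have "J x1 > 0" using bd by blast
        then show False using x1(1) by (auto simp: K_def)
      qed
      ultimately have m1: "m < 1" by simp
      have m0: "m \<ge> 0" by (simp add: m_def)
      define r where "r = (m+1)/2"
      have r: "m < r" "r < 1" "0 < r" using m1 m0 by (auto simp: r_def)
      have Jr: "J y > 0" if "norm y = r" for y
      proof (rule ccontr)
        assume "\<not> J y > 0"
        then have "y \<in> K" using that r by (auto simp: K_def)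
        then show False using x1(2) that r by (auto simp: m_def)
      qed
      have nx0: "norm x0 \<le> m" using x1(2) x0K by (simp add: m_def)
      define c where "c = cos \<alpha>"
      define s where "s = sin \<alpha>"
      have cs: "c^2 + s^2 = 1" by (simp add: c_def s_def)
      define f where "f = (\<lambda>z. Complex (pdx UNIV u (Re z, Im z)) (- pdy UNIV u (Re z, Im z)))"
      define g where "g = (\<lambda>z. Complex (pdx UNIV v (Re z, Im z)) (- pdy UNIV v (Re z, Im z)))"
      have hf: "f holomorphic_on ball 0 1" unfolding f_def by (rule harm_holo[OF assms(3)])
      have hg: "g holomorphic_on ball 0 1" unfolding g_def by (rule harm_holo[OF assms(4)])
      define A where "A z = c * pdx UNIV u (Re z, Im z) + s * pdx UNIV v (Re z, Im z)" for z
      define B where "B z = c * pdy UNIV u (Re z, Im z) + s * pdy UNIV v (Re z, Im z)" for z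
      have AB: "(A z)^2 + (B z)^2 > 0" if z: "z \<in> ball 0 1" for z
      proof -
        have p: "(Re z, Im z) \<in> ball 0 1" using z norm_cp[of z] by simp
        have "grad UNIV (\<lambda>y. cos \<alpha> * u y + sin \<alpha> * v y) (Re z, Im z) = (A z, B z)"
          unfolding grad_def A_def B_def c_def s_def
          using pd_comb[of u "(Re z, Im z)" v] du dv p by simp
        then have "(A z, B z) \<noteq> (0,0)" using nz p by metis
        then have "A z \<noteq> 0 \<or> B z \<noteq> 0" by auto
        then show ?thesis by (simp add: sum_power2_gt_zero_iff)
      qed
      have Fz: "of_real c * f z + of_real s * g z = Complex (A z) (- B z)" for z
        by (simp add: f_def g_def A_def B_def complex_eq_iff)
      have Fnz: "of_real c * f z + of_real s * g z \<noteq> 0" if "z \<in> ball 0 1" for z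
        using AB[OF that] unfolding Fz by (auto simp: complex_eq_iff)
      define \<psi> where "\<psi> = (\<lambda>z. -\<i> * ((- of_real s * f z + of_real c * g z) / (of_real c * f z + of_real s * g z)))"
      have h\<psi>: "\<psi> holomorphic_on ball 0 1"
        unfolding \<psi>_def using hf hg Fnz
        by (intro holomorphic_intros holomorphic_on_divide) auto
      have key: "Re (\<psi> z) < 0 \<longleftrightarrow> J (Re z, Im z) > 0" if z: "z \<in> ball 0 1" for z
      proof -
        have p: "(Re z, Im z) \<in> ball 0 1" using z norm_cp[of z] by simp
        have "Re (\<psi> z) * ((A z)^2 + (B z)^2) = - J (Re z, Im z)"
          using comp_id[OF cs AB[OF z, unfolded A_def B_def]] Jint[OF p]
          unfolding \<psi>_def f_def g_def A_def B_def by simp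
        moreover have "(A z)^2 + (B z)^2 > 0" using AB[OF z] .
        ultimately show ?thesis by (rule sgn_aux)
      qed
      have sub: "sphere (0::complex) r \<subseteq> ball 0 1" "cball (0::complex) r \<subseteq> ball 0 1" using r by auto
      have cont: "continuous_on (cball 0 r) \<psi>"
        using holomorphic_on_imp_continuous_on[OF h\<psi>] continuous_on_subset sub(2) by blast
      have "continuous_on (sphere 0 r) (\<lambda>z. Re (\<psi> z))"
        using cont by (intro continuous_intros) (auto intro: continuous_on_subset)
      then obtain z1 where z1: "z1 \<in> sphere 0 r" "\<forall>z\<in>sphere 0 r. Re (\<psi> z) \<le> Re (\<psi> z1)"
        using continuous_attains_sup[OF compact_sphere, of 0 r "\<lambda>z. Re (\<psi> z)"] r
        by (auto simp: sphere_eq_empty)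
      have "J (Re z1, Im z1) > 0" using Jr[of "(Re z1, Im z1)"] z1(1) norm_cp[of z1] by simp
      then have neg: "Re (\<psi> z1) < 0" using key[of z1] z1(1) sub by auto
      define z0 where "z0 = Complex (fst x0) (snd x0)"
      have z0: "(Re z0, Im z0) = x0" by (simp add: z0_def)
      have "cmod z0 = norm x0" using norm_cp[of z0] z0 by simp
      then have z0in: "z0 \<in> cball 0 r" using nx0 r by simp
      have "Re (\<psi> z0) \<le> Re (\<psi> z1)"
      proof (rule maximum_real_frontier[of \<psi> "cball 0 r"])
        show "\<psi> holomorphic_on interior (cball 0 r)"
        proof -
          have "ball (0::complex) r \<subseteq> ball 0 1" using r by auto
          then show ?thesis using holomorphic_on_subset[OF h\<psi>] by simp
        qed
        show "continuous_on (closure (cball 0 r)) \<psi>" using cont by simp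
      qed (use z1 z0in in auto)
      then have "Re (\<psi> z0) < 0" using neg by simp
      then have "J x0 > 0" using key[of z0] z0in sub z0 by auto
      then show False using x0 by simp
    qed
  qed
qed

end
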